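(* Let $\mathcal{X}\subseteq\mathbb{R}^d$, let $\mathcal{D}$ be any distribution over pairs $(x,y)$ with $x\in\mathcal{X}$ and $y\in\{1,\dots,k\}$, and let $h:\mathcal{X}\to\{-1,1\}$ be any hypothesis. Let $\pi_i=P(y=i)$, and define \[ J(h)=2\sum_{i=1}^k \pi_i\,\bigl|P(h(x)>0)-P(h(x)>0\mid i)\bigr|. \] Then $J(h)\in[0,1]$. Furthermore, $J(h)=1$ if and only if $h$ induces a partition that is both maximally pure and maximally balanced, i.e. $\alpha=0$ and $\beta=1/2$, where $\alpha=\sum_{i=1}^k\pi_i\min\bigl(P(h(x)>0\mid i),P(h(x)<0\mid i)\bigr)$ and $\beta=P(h(x)>0)$.
   Context: $P(h(x)>0\mid i)$ denotes the probability that $h(x)>0$ conditional on the label being $i$. The quantity $\alpha$ is called the purity factor and $\beta$ the balancing factor. A partition is maximally pure if $\alpha=0$, meaning each class is sent exclusively to one side. It is maximally balanced if $\beta=1/2$. *)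

theory Defs
  imports "HOL-Probability.Probability"
begin

definition class_prob :: "((real^'d) \<times> nat) measure \<Rightarrow> nat \<Rightarrow> real" where
  "class_prob M i = measure M {p \<in> space M. snd p = i}"

definition pos_prob :: "((real^'d) \<times> nat) measure \<Rightarrow> (real^'d \<Rightarrow> real) \<Rightarrow> real" where
  "pos_prob M h = measure M {p \<in> space M. h (fst p) > 0}"

text \<open>P(h(x) > 0 | y = i) (elementary conditional probability; 0 if P(y=i)=0,
  in which case it is multiplied by pi_i = 0 everywhere it occurs)\<close>
definition cond_pos :: "((real^'d) \<times> nat) measure \<Rightarrow> (real^'d \<Rightarrow> real) \<Rightarrow> nat \<Rightarrow> real" where
  "cond_pos M h i = measure M {p \<in> space M. h (fst p) > 0 \<and> snd p = i} / class_prob M i"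

definition cond_neg :: "((real^'d) \<times> nat) measure \<Rightarrow> (real^'d \<Rightarrow> real) \<Rightarrow> nat \<Rightarrow> real" where
  "cond_neg M h i = measure M {p \<in> space M. h (fst p) < 0 \<and> snd p = i} / class_prob M i"

definition J_obj :: "((real^'d) \<times> nat) measure \<Rightarrow> (real^'d \<Rightarrow> real) \<Rightarrow> nat \<Rightarrow> real" where
  "J_obj M h k = 2 * (\<Sum>i=1..k. class_prob M i * \<bar>pos_prob M h - cond_pos M h i\<bar>)"

definition purity :: "((real^'d) \<times> nat) measure \<Rightarrow> (real^'d \<Rightarrow> real) \<Rightarrow> nat \<Rightarrow> real" where
  "purity M h k = (\<Sum>i=1..k. class_prob M i * min (cond_pos M h i) (cond_neg M h i))"

definition balance :: "((real^'d) \<times> nat) measure \<Rightarrow> (real^'d \<Rightarrow> real) \<Rightarrow> real" where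
  "balance M h = pos_prob M h"

end

theory Submission
  imports Defs
begin

lemma real_core:
  fixes pi a :: "nat \<Rightarrow> real" and I :: "nat set" and \<beta> :: real
  assumes fin: "finite I"
    and bnd: "\<And>i. i \<in> I \<Longrightarrow> 0 \<le> a i \<and> a i \<le> pi i"
    and s1: "(\<Sum>i\<in>I. pi i) = 1"
    and s2: "(\<Sum>i\<in>I. a i) = \<beta>"
  shows "2 * (\<Sum>i\<in>I. \<bar>\<beta> * pi i - a i\<bar>) \<in> {0..1} \<and>
     (2 * (\<Sum>i\<in>I. \<bar>\<beta> * pi i - a i\<bar>) = 1 \<longleftrightarrow>
        (\<Sum>i\<in>I. min (a i) (pi i - a i)) = 0 \<and> \<beta> = 1/2)"
proof -
  have b0: "0 \<le> \<beta>" using s2 bnd by (metis sum_nonneg)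
  have "\<beta> \<le> 1" using s1 s2 bnd by (metis sum_mono)
  have le: "\<bar>\<beta> * pi i - a i\<bar> \<le> \<beta> * pi i + a i - 2 * \<beta> * a i" if "i \<in> I" for i
  proof -
    have "a i \<le> pi i" "0 \<le> a i" using bnd that by auto
    then have "\<beta> * a i \<le> \<beta> * pi i" "\<beta> * a i \<le> a i"
      using b0 \<open>\<beta> \<le> 1\<close> by (auto intro: mult_left_mono mult_left_le_one_le)
    then show ?thesis by (simp add: abs_if)
  qed
  have S: "(\<Sum>i\<in>I. \<beta> * pi i + a i - 2 * \<beta> * a i) = 2 * \<beta> * (1 - \<beta>)"
  proof -
    have "(\<Sum>i\<in>I. \<beta> * pi i + a i - 2 * \<beta> * a i) = \<beta> * (\<Sum>i\<in>I. pi i) + (\<Sum>i\<in>I. a i) - 2 * \<beta> * (\<Sum>i\<in>I. a i)"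
      by (simp add: sum.distrib sum_subtractf sum_distrib_left)
    then show ?thesis using s1 s2 by (simp add: algebra_simps)
  qed
  have sle: "(\<Sum>i\<in>I. \<bar>\<beta> * pi i - a i\<bar>) \<le> 2 * \<beta> * (1 - \<beta>)"
    using sum_mono[of I "\<lambda>i. \<bar>\<beta> * pi i - a i\<bar>" "\<lambda>i. \<beta> * pi i + a i - 2 * \<beta> * a i"] le S by simp
  have q: "4 * \<beta> * (1 - \<beta>) \<le> 1" using sum_squares_ge_zero[of "\<beta> - 1/2" 0]
    by (simp add: algebra_simps power2_eq_square)
  have part1: "2 * (\<Sum>i\<in>I. \<bar>\<beta> * pi i - a i\<bar>) \<in> {0..1}"
    using sle q by (simp add: sum_nonneg)
  have fwd: "(\<Sum>i\<in>I. min (a i) (pi i - a i)) = 0 \<and> \<beta> = 1/2"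
    if J1: "2 * (\<Sum>i\<in>I. \<bar>\<beta> * pi i - a i\<bar>) = 1"
  proof -
    have "1 \<le> 4 * \<beta> * (1 - \<beta>)" using J1 sle by simp
    then have "(\<beta> - 1/2)^2 \<le> 0" by (simp add: algebra_simps power2_eq_square)
    then have hb: "\<beta> = 1/2" by simp
    have "(\<Sum>i\<in>I. (\<beta> * pi i + a i - 2 * \<beta> * a i) - \<bar>\<beta> * pi i - a i\<bar>) = 0"
      using J1 S hb by (simp only: sum_subtractf) simp
    then have z: "\<forall>i\<in>I. (\<beta> * pi i + a i - 2 * \<beta> * a i) - \<bar>\<beta> * pi i - a i\<bar> = 0"
      using sum_nonneg_eq_0_iff[OF fin] le by (metis (no_types, lifting) diff_ge_0_iff_ge)
    have "\<forall>i\<in>I. min (a i) (pi i - a i) = 0"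
    proof
      fix i assume i: "i \<in> I"
      have "pi i / 2 - \<bar>pi i / 2 - a i\<bar> = 0" using z i hb by (simp add: algebra_simps)
      then show "min (a i) (pi i - a i) = 0" by (auto simp: abs_if min_def split: if_splits)
    qed
    then show ?thesis using hb by simp
  qed
  have bwd: "2 * (\<Sum>i\<in>I. \<bar>\<beta> * pi i - a i\<bar>) = 1"
    if P: "(\<Sum>i\<in>I. min (a i) (pi i - a i)) = 0" and hb: "\<beta> = 1/2"
  proof -
    have "\<forall>i\<in>I. min (a i) (pi i - a i) = 0"
      using sum_nonneg_eq_0_iff[OF fin, of "\<lambda>i. min (a i) (pi i - a i)"] P bnd by auto
    then have "\<forall>i\<in>I. \<bar>\<beta> * pi i - a i\<bar> = pi i / 2"
    proof (intro ballI)
      fix i assume "\<forall>i\<in>I. min (a i) (pi i - a i) = 0" "i \<in> I"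
      then have "min (a i) (pi i - a i) = 0" "0 \<le> a i" "a i \<le> pi i" using bnd by auto
      then show "\<bar>\<beta> * pi i - a i\<bar> = pi i / 2" using hb
        by (cases "a i \<le> pi i - a i") (auto simp: min_def abs_if hb)
    qed
    then have "(\<Sum>i\<in>I. \<bar>\<beta> * pi i - a i\<bar>) = (\<Sum>i\<in>I. pi i / 2)" by (intro sum.cong) auto
    also have "\<dots> = 1/2" using s1 by (simp add: sum_divide_distrib[symmetric])
    finally show ?thesis by simp
  qed
  show ?thesis using part1 fwd bwd by blast
qed


theorem lemma1:
  fixes M :: "((real^'d) \<times> nat) measure"
    and X :: "(real^'d) set"
    and h :: "real^'d \<Rightarrow> real"
    and k :: nat
  assumes "prob_space M"
    and "AE p in M. fst p \<in> X \<and> snd p \<in> {1..k}"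
    and "\<And>x. x \<in> X \<Longrightarrow> h x \<in> {-1, 1}"
    and "(\<lambda>p. h (fst p)) \<in> M \<rightarrow>\<^sub>M borel"
    and "snd \<in> M \<rightarrow>\<^sub>M count_space UNIV"
  shows "J_obj M h k \<in> {0..1} \<and>
         (J_obj M h k = 1 \<longleftrightarrow> purity M h k = 0 \<and> balance M h = 1/2)"
proof -
  interpret prob_space M by fact
  note [measurable] = assms(4) assms(5)
  define pi where "pi i = class_prob M i" for i
  define a where "a i = measure M {p \<in> space M. h (fst p) > 0 \<and> snd p = i}" for i
  define b where "b i = measure M {p \<in> space M. h (fst p) < 0 \<and> snd p = i}" for i
  define \<beta> where "\<beta> = pos_prob M h"
  have mA[measurable]: "{p \<in> space M. h (fst p) > 0 \<and> snd p = i} \<in> sets M" for i by measurable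
  have mB[measurable]: "{p \<in> space M. h (fst p) < 0 \<and> snd p = i} \<in> sets M" for i by measurable
  have mC[measurable]: "{p \<in> space M. snd p = i} \<in> sets M" for i by measurable
  have mP[measurable]: "{p \<in> space M. h (fst p) > 0} \<in> sets M" by measurable
  have AEh: "AE p in M. h (fst p) \<in> {-1,1} \<and> snd p \<in> {1..k}" using assms(2)
    by eventually_elim (use assms(3) in auto)
  have F3: "a i + b i = pi i" for i
  proof -
    have "a i + b i = measure M ({p \<in> space M. h (fst p) > 0 \<and> snd p = i} \<union> {p \<in> space M. h (fst p) < 0 \<and> snd p = i})"
      unfolding a_def b_def by (subst finite_measure_Union) auto
    also have "\<dots> = measure M {p \<in> space M. snd p = i}"
      by (rule measure_eq_AE) (use AEh in \<open>eventually_elim, auto\<close>)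
    finally show ?thesis by (simp add: pi_def class_prob_def)
  qed
  have F4: "0 \<le> a i \<and> a i \<le> pi i" for i
    using F3[of i] measure_nonneg[of M] by (simp add: a_def b_def) (smt (verit) measure_nonneg)
  have F1: "(\<Sum>i\<in>{1..k}. pi i) = 1"
  proof -
    have "(\<Sum>i\<in>{1..k}. pi i) = measure M (\<Union>i\<in>{1..k}. {p \<in> space M. snd p = i})"
      unfolding pi_def class_prob_def
      by (subst finite_measure_finite_Union) (auto simp: disjoint_family_on_def)
    also have "\<dots> = measure M (space M)"
      by (rule measure_eq_AE) (use AEh in \<open>eventually_elim, auto\<close>)
    finally show ?thesis by (simp add: prob_space)
  qed
  have F2: "(\<Sum>i\<in>{1..k}. a i) = \<beta>"
  proof -
    have "(\<Sum>i\<in>{1..k}. a i) = measure M (\<Union>i\<in>{1..k}. {p \<in> space M. h (fst p) > 0 \<and> snd p = i})"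
      unfolding a_def
      by (subst finite_measure_finite_Union) (auto simp: disjoint_family_on_def)
    also have "\<dots> = measure M {p \<in> space M. h (fst p) > 0}"
      by (rule measure_eq_AE) (use AEh in \<open>eventually_elim, auto\<close>)
    finally show ?thesis by (simp add: \<beta>_def pos_prob_def)
  qed
  have J: "J_obj M h k = 2 * (\<Sum>i\<in>{1..k}. \<bar>\<beta> * pi i - a i\<bar>)"
  proof -
    have "class_prob M i * \<bar>pos_prob M h - cond_pos M h i\<bar> = \<bar>\<beta> * pi i - a i\<bar>" for i
    proof (cases "pi i = 0")
      case True then have "a i = 0" using F4[of i] by simp
      then show ?thesis using True by (simp add: pi_def)
    next
      case False
      then have "pi i > 0" using F4[of i] by simp
      then have "pi i * \<bar>\<beta> - a i / pi i\<bar> = \<bar>pi i * (\<beta> - a i / pi i)\<bar>" by (simp add: abs_mult)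
      also have "\<dots> = \<bar>\<beta> * pi i - a i\<bar>" using False by (simp add: algebra_simps)
      finally show ?thesis by (simp add: pi_def \<beta>_def cond_pos_def a_def)
    qed
    then show ?thesis by (simp add: J_obj_def)
  qed
  have P: "purity M h k = (\<Sum>i\<in>{1..k}. min (a i) (pi i - a i))"
  proof -
    have "class_prob M i * min (cond_pos M h i) (cond_neg M h i) = min (a i) (pi i - a i)" for i
    proof (cases "pi i = 0")
      case True then have "a i = 0" using F4[of i] by simp
      then show ?thesis using True by (simp add: pi_def)
    next
      case False
      then have pos: "pi i > 0" using F4[of i] by simp
      have "pi i * min (a i / pi i) (b i / pi i) = min (pi i * (a i / pi i)) (pi i * (b i / pi i))"
        using pos by (simp add: min_mult_distrib_left)
      also have "\<dots> = min (a i) (pi i - a i)" using False F3[of i] by (simp add: algebra_simps)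
      finally show ?thesis by (simp add: pi_def cond_pos_def cond_neg_def a_def b_def)
    qed
    then show ?thesis by (simp add: purity_def)
  qed
  show ?thesis
    using real_core[of "{1..k}" a pi \<beta>] F1 F2 F4 J P by (simp add: balance_def \<beta>_def)
qed

end
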